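(* Let $K$ be an infinite commutative domain and $R$ a unital associative $K$-algebra on which $K$ acts torsion-freely. Suppose $(R,\cdot)$ satisfies a semigroup identity $u=v$, and write $u=au'b$, $v=av'b$ with $a,b$ (possibly empty) words and $u',v'$ words such that $u'=v'$ is reduced. Then $(R,\cdot)$ satisfies $u'=v'$.
   Context: A semigroup identity $u=v$ ($u\neq v$ words in the free semigroup on variables $x_1,x_2,\dots$) holds in a semigroup if both sides agree under every substitution. The identity $u'=v'$ is reduced if the first letters of $u'$ and $v'$ differ and the last letters of $u'$ and $v'$ differ. *)

theory Defs
  imports Main
begin

text \<open>Words in the free semigroup on variables x_1, x_2, ... are nonempty lists of
variable indices.\<close>

definition word_eval :: "(nat \<Rightarrow> 'r::monoid_mult) \<Rightarrow> nat list \<Rightarrow> 'r" where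
  "word_eval s w = prod_list (map s w)"

definition satisfies_identity :: "'r::monoid_mult itself \<Rightarrow> nat list \<Rightarrow> nat list \<Rightarrow> bool" where
  "satisfies_identity TYPE('r) u v \<longleftrightarrow> (\<forall>s::nat \<Rightarrow> 'r. word_eval s u = word_eval s v)"

definition reduced_identity :: "nat list \<Rightarrow> nat list \<Rightarrow> bool" where
  "reduced_identity u v \<longleftrightarrow> u \<noteq> [] \<and> v \<noteq> [] \<and> hd u \<noteq> hd v \<and> last u \<noteq> last v"

definition is_algebra :: "('k::comm_ring_1 \<Rightarrow> 'r::ring_1 \<Rightarrow> 'r) \<Rightarrow> bool" where
  "is_algebra sm \<longleftrightarrow>
     (\<forall>k x y. sm k (x + y) = sm k x + sm k y) \<and>
     (\<forall>k l x. sm (k + l) x = sm k x + sm l x) \<and>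
     (\<forall>k l x. sm (k * l) x = sm k (sm l x)) \<and>
     (\<forall>x. sm 1 x = x) \<and>
     (\<forall>k x y. sm k (x * y) = sm k x * y) \<and>
     (\<forall>k x y. sm k (x * y) = x * sm k y)"

definition torsion_free_action :: "('k::comm_ring_1 \<Rightarrow> 'r::ring_1 \<Rightarrow> 'r) \<Rightarrow> bool" where
  "torsion_free_action sm \<longleftrightarrow> (\<forall>k x. k \<noteq> 0 \<longrightarrow> x \<noteq> 0 \<longrightarrow> sm k x \<noteq> 0)"

end

theory Submission
  imports Defs
begin

locale alg =
  fixes sm :: "'k::idom \<Rightarrow> 'r::ring_1 \<Rightarrow> 'r"
  assumes alg: "is_algebra sm"
begin

lemma sm_add: "sm k (a + b) = sm k a + sm k b"
  using alg unfolding is_algebra_def by blast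
lemma sm_addk: "sm (k + l) a = sm k a + sm l a"
  using alg unfolding is_algebra_def by blast
lemma sm_mult: "sm (k * l) a = sm k (sm l a)"
  using alg unfolding is_algebra_def by blast
lemma sm_one: "sm 1 a = a"
  using alg unfolding is_algebra_def by blast
lemma sm_m1: "sm k (a * b) = sm k a * b"
  using alg unfolding is_algebra_def by blast
lemma sm_m2: "sm k (a * b) = a * sm k b"
  using alg unfolding is_algebra_def by blast

lemma sm_zero[simp]: "sm k 0 = 0"
  using sm_add[of k 0 0] by simp
lemma sm_zerok[simp]: "sm 0 a = 0"
  using sm_addk[of 0 0 a] by simp
lemma sm_neg: "sm k (- a) = - sm k a"
proof -
  have "sm k a + sm k (- a) = 0" using sm_add[of k a "-a"] by simp
  then show ?thesis by (metis minus_unique)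
qed
lemma sm_diff: "sm k (a - b) = sm k a - sm k b"
  using sm_add[of k a "-b"] sm_neg[of k b] by simp
lemma sm_lmul: "sm k 1 * z = sm k z"
  using sm_m1[of k 1 z] by simp
lemma sm_rmul: "z * sm k 1 = sm k z"
  using sm_m2[of k z 1] by simp

fun hev :: "'r list \<Rightarrow> 'k \<Rightarrow> 'r" where
  "hev [] l = 0"
| "hev (c # cs) l = c + sm l (hev cs l)"

fun qd :: "'r list \<Rightarrow> 'k \<Rightarrow> 'r list" where
  "qd [] m = []"
| "qd (c # cs) m = (if cs = [] then [] else hev cs m # qd cs m)"

lemma hev_q: "hev cs l = hev cs m + sm (l - m) (hev (qd cs m) l)"
proof (induction cs)
  case Nil
  then show ?case by simp
next
  case (Cons c cs)
  show ?case
  proof (cases "cs = []")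
    case True
    then show ?thesis by simp
  next
    case False
    define P where "P = hev cs m"
    define Q where "Q = hev (qd cs m) l"
    have e1: "sm l (sm (l - m) Q) = sm (l - m) (sm l Q)"
      by (metis sm_mult mult.commute)
    have e2: "sm l P = sm m P + sm (l - m) P"
      using sm_addk[of m "l - m" P] by simp
    have "hev (c # cs) l = c + sm l (P + sm (l - m) Q)"
      using Cons.IH by (simp add: P_def Q_def)
    also have "\<dots> = c + sm m P + sm (l - m) (P + sm l Q)"
      by (simp add: sm_add e1 e2 add.assoc)
    also have "\<dots> = hev (c # cs) m + sm (l - m) (hev (qd (c # cs) m) l)"
      using False by (simp add: P_def Q_def add.assoc)
    finally show ?thesis .
  qed
qed

lemma hev_zeros: "\<forall>x\<in>set cs. x = 0 \<Longrightarrow> hev cs l = 0"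
  by (induction cs) auto

lemma qd_zero: "\<forall>x\<in>set (qd cs m). x = 0 \<Longrightarrow> \<forall>x\<in>set (tl cs). x = 0"
proof (induction cs)
  case Nil
  then show ?case by simp
next
  case (Cons c cs)
  show ?case
  proof (cases cs)
    case Nil
    then show ?thesis by simp
  next
    case (Cons c1 rest)
    have h1: "hev cs m = 0" and h2: "\<forall>x\<in>set (qd cs m). x = 0"
      using Cons.prems Cons by auto
    have "\<forall>x\<in>set rest. x = 0" using Cons.IH[OF h2] Cons by simp
    then have "hev rest m = 0" by (rule hev_zeros)
    then have "c1 = 0" using h1 Cons by simp
    then show ?thesis using \<open>\<forall>x\<in>set rest. x = 0\<close> Cons by simp
  qed
qed

lemma length_qd: "length (qd cs m) = length cs - 1"
  by (induction cs) auto

lemma vanish: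
  assumes inf: "infinite (UNIV :: 'k set)" and tf: "torsion_free_action sm"
  shows "finite F \<Longrightarrow> \<forall>l. l \<notin> F \<longrightarrow> hev cs l = 0 \<Longrightarrow> \<forall>x\<in>set cs. x = 0"
proof (induction "length cs" arbitrary: cs F rule: less_induct)
  case less
  note finF = less.prems(1) and van = less.prems(2)
  show ?case
  proof (cases cs)
    case Nil
    then show ?thesis by simp
  next
    case (Cons c rest)
    obtain m where m: "m \<notin> F" using ex_new_if_finite[OF inf finF] by blast
    have hm: "hev cs m = 0" using van m by simp
    have all: "\<forall>l. l \<notin> F \<union> {m} \<longrightarrow> hev (qd cs m) l = 0"
    proof (intro allI impI)
      fix l assume l: "l \<notin> F \<union> {m}"
      have hl: "hev cs l = 0" using van l by simp
      have eq: "hev cs l = hev cs m + sm (l - m) (hev (qd cs m) l)" by (rule hev_q)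
      have z: "sm (l - m) (hev (qd cs m) l) = 0" using eq unfolding hl hm by simp
      have nz: "l - m \<noteq> 0" using l by simp
      show "hev (qd cs m) l = 0"
      proof (rule ccontr)
        assume "hev (qd cs m) l \<noteq> 0"
        then have "sm (l - m) (hev (qd cs m) l) \<noteq> 0"
          using nz tf unfolding torsion_free_action_def by simp
        then show False using z by simp
      qed
    qed
    have len: "length (qd cs m) < length cs" using Cons length_qd[of cs m] by simp
    have fin: "finite (F \<union> {m})" using finF by simp
    have "\<forall>x\<in>set (qd cs m). x = 0" by (rule less.hyps[OF len fin all])
    then have "\<forall>x\<in>set (tl cs). x = 0" by (rule qd_zero)
    then have z: "\<forall>x\<in>set rest. x = 0" using Cons by simp
    then have "hev rest m = 0" by (rule hev_zeros)
    then have "c = 0" using hm Cons by simp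
    then show ?thesis using z Cons by simp
  qed
qed

fun addc :: "'r \<Rightarrow> 'r list \<Rightarrow> 'r list" where
  "addc c [] = [c]"
| "addc c (e # es) = (c + e) # es"

fun mulx :: "('r \<Rightarrow> 'r) \<Rightarrow> 'r list \<Rightarrow> 'r list" where
  "mulx f [] = []"
| "mulx f (d # ds) = f d # addc d (mulx f ds)"

lemma hev_addc: "hev (addc c es) l = c + hev es l"
  by (cases es) (auto simp: add.assoc)

lemma hev_mulx:
  assumes fadd: "\<And>a b. f (a + b) = f a + f b" and fsm: "\<And>k a. f (sm k a) = sm k (f a)"
  shows "hev (mulx f d) l = sm l (hev d l) + f (hev d l)"
proof (induction d)
  case Nil
  have "f 0 = 0" using fadd[of 0 0] by simp
  then show ?case by simp
next
  case (Cons d ds)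
  then show ?case by (simp add: hev_addc sm_add fadd fsm algebra_simps)
qed

lemma addc_mulx_zero:
  assumes f0: "f 0 = 0"
  shows "\<forall>c. (\<forall>x\<in>set (addc c (mulx f d)). x = 0) \<longrightarrow> c = 0 \<and> (\<forall>x\<in>set d. x = 0)"
proof (induction d)
  case Nil
  then show ?case by simp
next
  case (Cons d0 ds)
  show ?case
  proof (intro allI impI)
    fix c assume h: "\<forall>x\<in>set (addc c (mulx f (d0 # ds))). x = 0"
    then have "\<forall>x\<in>set (addc d0 (mulx f ds)). x = 0" by simp
    then have "d0 = 0 \<and> (\<forall>x\<in>set ds. x = 0)" using Cons.IH by blast
    moreover then have "c = 0" using h f0 by simp
    ultimately show "c = 0 \<and> (\<forall>x\<in>set (d0 # ds). x = 0)" by simp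
  qed
qed

lemma mulx_zero:
  assumes f0: "f 0 = 0" and h: "\<forall>x\<in>set (mulx f d). x = 0"
  shows "\<forall>x\<in>set d. x = 0"
proof (cases d)
  case Nil
  then show ?thesis by simp
next
  case (Cons d0 ds)
  then have "\<forall>x\<in>set (addc d0 (mulx f ds)). x = 0" using h by simp
  then have "d0 = 0 \<and> (\<forall>x\<in>set ds. x = 0)"
    using addc_mulx_zero[where f=f and d=ds, OF f0] by (elim allE[of _ d0]) (rule mp)
  then show ?thesis using Cons by simp
qed

fun lsub :: "'r list \<Rightarrow> 'r list \<Rightarrow> 'r list" where
  "lsub [] [] = []"
| "lsub (a # as) [] = a # lsub as []"
| "lsub [] (b # bs) = (- b) # lsub [] bs"
| "lsub (a # as) (b # bs) = (a - b) # lsub as bs"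

lemma hev_lsub: "hev (lsub as bs) l = hev as l - hev bs l"
  apply (induction as bs rule: lsub.induct)
     apply (simp_all add: sm_diff sm_neg)
  done

fun wp :: "nat \<Rightarrow> 'r \<Rightarrow> (nat \<Rightarrow> 'r) \<Rightarrow> nat list \<Rightarrow> 'r list" where
  "wp x y s [] = [1]"
| "wp x y s (z # w) = (if z = x then mulx (\<lambda>r. y * r) (wp x y s w)
      else map (\<lambda>r. s z * r) (wp x y s w))"

lemma hev_map: "hev (map (\<lambda>r. a * r) d) l = a * hev d l"
  by (induction d) (auto simp: distrib_left sm_m2)

lemma word_eval_Cons: "word_eval s (z # w) = s z * word_eval s w"
  by (simp add: word_eval_def)

lemma word_eval_snoc: "word_eval s (w @ [z]) = word_eval s w * s z"
  by (simp add: word_eval_def)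

lemma hev_wp: "hev (wp x y s w) l = word_eval (s(x := sm l 1 + y)) w"
proof (induction w)
  case Nil
  then show ?case by (simp add: word_eval_def)
next
  case (Cons z w)
  show ?case
  proof (cases "z = x")
    case True
    have "hev (wp x y s (z # w)) l = sm l (hev (wp x y s w) l) + y * hev (wp x y s w) l"
    proof -
      have fadd: "\<And>a b. y * (a + b) = y * a + y * b" by (simp add: distrib_left)
      have fsm: "\<And>k a. y * (sm k a) = sm k (y * a)" by (simp add: sm_m2)
      have "wp x y s (z # w) = mulx (\<lambda>r. y * r) (wp x y s w)" using True by simp
      then show ?thesis using hev_mulx[of "\<lambda>r. y * r", OF fadd fsm] by simp
    qed
    also have "\<dots> = (sm l 1 + y) * hev (wp x y s w) l"
      by (simp add: distrib_right sm_lmul)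
    finally show ?thesis using Cons.IH True by (simp add: word_eval_Cons)
  next
    case False
    then show ?thesis using Cons.IH by (simp add: hev_map word_eval_Cons)
  qed
qed

lemma hev_wp0: "hev (wp x (s x) s w) 0 = word_eval s w"
  using hev_wp[of x "s x" s w 0] by simp

lemma cancel_left:
  fixes s :: "nat \<Rightarrow> 'r"
  assumes inf: "infinite (UNIV :: 'k set)" and tf: "torsion_free_action sm"
    and h: "\<forall>s::nat\<Rightarrow>'r. word_eval s (x # w1) = word_eval s (x # w2)"
  shows "word_eval s w1 = word_eval s w2"
proof -
  define y where "y = s x"
  define D where "D = lsub (wp x y s w1) (wp x y s w2)"
  define f where "f = (\<lambda>r. y * r)"
  have fadd: "\<And>a b. f (a + b) = f a + f b" by (simp add: f_def distrib_left)
  have fsm: "\<And>k a. f (sm k a) = sm k (f a)" by (simp add: f_def sm_m2)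
  have "\<forall>l. l \<notin> {} \<longrightarrow> hev (mulx f D) l = 0"
  proof (intro allI impI)
    fix l :: 'k
    define s' where "s' = s(x := sm l 1 + y)"
    have "hev (mulx f D) l = sm l (hev D l) + y * hev D l"
      by (simp only: hev_mulx[OF fadd fsm], simp add: f_def)
    also have "\<dots> = (sm l 1 + y) * hev D l" by (simp add: distrib_right sm_lmul)
    also have "\<dots> = (sm l 1 + y) * word_eval s' w1 - (sm l 1 + y) * word_eval s' w2"
      by (simp add: D_def hev_lsub hev_wp s'_def right_diff_distrib)
    also have "\<dots> = word_eval s' (x # w1) - word_eval s' (x # w2)"
      by (simp add: word_eval_Cons s'_def)
    also have "\<dots> = 0" using h by simp
    finally show "hev (mulx f D) l = 0" .
  qed
  then have "\<forall>z\<in>set (mulx f D). z = 0" using vanish[OF inf tf] by blast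
  then have "\<forall>z\<in>set D. z = 0" using mulx_zero[of f D] by (simp add: f_def)
  then have "hev D 0 = 0" by (rule hev_zeros)
  then show ?thesis by (simp add: D_def hev_lsub y_def hev_wp0)
qed

lemma cancel_right:
  fixes s :: "nat \<Rightarrow> 'r"
  assumes inf: "infinite (UNIV :: 'k set)" and tf: "torsion_free_action sm"
    and h: "\<forall>s::nat\<Rightarrow>'r. word_eval s (w1 @ [x]) = word_eval s (w2 @ [x])"
  shows "word_eval s w1 = word_eval s w2"
proof -
  define y where "y = s x"
  define D where "D = lsub (wp x y s w1) (wp x y s w2)"
  define f where "f = (\<lambda>r. r * y)"
  have fadd: "\<And>a b. f (a + b) = f a + f b" by (simp add: f_def distrib_right)
  have fsm: "\<And>k a. f (sm k a) = sm k (f a)" by (simp add: f_def sm_m1)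
  have "\<forall>l. l \<notin> {} \<longrightarrow> hev (mulx f D) l = 0"
  proof (intro allI impI)
    fix l :: 'k
    define s' where "s' = s(x := sm l 1 + y)"
    have "hev (mulx f D) l = sm l (hev D l) + hev D l * y"
      by (simp only: hev_mulx[OF fadd fsm], simp add: f_def)
    also have "\<dots> = hev D l * (sm l 1 + y)" by (simp add: distrib_left sm_rmul)
    also have "\<dots> = word_eval s' w1 * (sm l 1 + y) - word_eval s' w2 * (sm l 1 + y)"
      by (simp add: D_def hev_lsub hev_wp s'_def left_diff_distrib)
    also have "\<dots> = word_eval s' (w1 @ [x]) - word_eval s' (w2 @ [x])"
      by (simp add: word_eval_snoc s'_def)
    also have "\<dots> = 0" using h by simp
    finally show "hev (mulx f D) l = 0" .
  qed
  then have "\<forall>z\<in>set (mulx f D). z = 0" using vanish[OF inf tf] by blast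
  then have "\<forall>z\<in>set D. z = 0" using mulx_zero[of f D] by (simp add: f_def)
  then have "hev D 0 = 0" by (rule hev_zeros)
  then show ?thesis by (simp add: D_def hev_lsub y_def hev_wp0)
qed

lemma cancel_prefix:
  fixes w1 w2 :: "nat list"
  assumes inf: "infinite (UNIV :: 'k set)" and tf: "torsion_free_action sm"
  shows "\<forall>s::nat\<Rightarrow>'r. word_eval s (a @ w1) = word_eval s (a @ w2) \<Longrightarrow> \<forall>s::nat\<Rightarrow>'r. word_eval s w1 = word_eval s w2"
proof (induction a)
  case Nil
  then show ?case by simp
next
  case (Cons x a)
  then show ?case using cancel_left[OF inf tf, of x "a @ w1" "a @ w2"] by simp
qed

lemma cancel_suffix:
  assumes inf: "infinite (UNIV :: 'k set)" and tf: "torsion_free_action sm"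
  shows "\<forall>s::nat\<Rightarrow>'r. word_eval s (w1 @ b) = word_eval s (w2 @ b) \<Longrightarrow> \<forall>s::nat\<Rightarrow>'r. word_eval s w1 = word_eval s w2"
proof (induction b rule: rev_induct)
  case Nil
  then show ?case by simp
next
  case (snoc x b)
  then show ?case using cancel_right[OF inf tf, of "w1 @ b" x "w2 @ b"] by simp
qed

end

theorem proposition1p4:
  fixes sm :: "'k::idom \<Rightarrow> 'r::ring_1 \<Rightarrow> 'r"
    and u v a b u' v' :: "nat list"
  assumes "infinite (UNIV :: 'k set)"
    and "is_algebra sm"
    and "torsion_free_action sm"
    and "u \<noteq> []" and "v \<noteq> []" and "u \<noteq> v"
    and "satisfies_identity TYPE('r) u v"
    and "u = a @ u' @ b" and "v = a @ v' @ b"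
    and "reduced_identity u' v'"
  shows "satisfies_identity TYPE('r) u' v'"
proof -
  interpret alg sm using assms(2) by unfold_locales
  have "\<forall>s::nat \<Rightarrow> 'r. word_eval s (a @ (u' @ b)) = word_eval s (a @ (v' @ b))"
    using assms(7-9) unfolding satisfies_identity_def by simp
  then have "\<forall>s::nat \<Rightarrow> 'r. word_eval s (u' @ b) = word_eval s (v' @ b)"
    using cancel_prefix[OF assms(1,3)] by blast
  then have "\<forall>s::nat \<Rightarrow> 'r. word_eval s u' = word_eval s v'"
    using cancel_suffix[OF assms(1,3)] by blast
  then show ?thesis unfolding satisfies_identity_def by simp
qed

end
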